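(* Let $\varphi$ be any forecasting system and $T$ a computable test supermartingale for $\varphi$. Then there is a recursive, positive, rational-valued test supermartingale $R$ for $\varphi$ such that $|4R(s)-T(s)|\le4\cdot2^{-|s|}$ for all $s\in\mathbb S$.
   Context: $\mathbb S$ is the set of finite binary strings, $\square$ the empty string, $|s|$ length, $sx$ concatenation. $\mathcal I$: nonempty closed subintervals of $[0,1]$; $\overline E_I(f)=\max_{p\in I}[pf(1)+(1-p)f(0)]$ for $f:\{0,1\}\to\mathbb R$. Forecasting system: any $\varphi:\mathbb S\to\mathcal I$. A supermartingale for $\varphi$ is $M:\mathbb S\to\mathbb R$ with $\overline E_{\varphi(s)}(M(s\,\cdot))\le M(s)$ for all $s$ ($M(s\,\cdot):x\mapsto M(sx)$); a test supermartingale is a non-negative one with $M(\square)=1$. A real map $r:\mathbb S\to\mathbb R$ is computable if there is a recursive $q:\mathbb S\times\mathbb N_0\to\mathbb Q$ with $|r(s)-q(s,N)|\le2^{-N}$ for all $s,N$; a rational-valued process is recursive if it is a recursive map $\mathbb S\to\mathbb Q$. *)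

theory Defs
  imports Complex_Main "HOL-Library.Nat_Bijection"
begin

text \<open>Finite binary strings are bool lists (True = 1, False = 0); the concatenation
  s x is s @ [x]; the empty string is []; |s| is length s.\<close>

definition forecasting_system :: "(bool list \<Rightarrow> real set) \<Rightarrow> bool" where
  "forecasting_system \<phi> \<longleftrightarrow> (\<forall>s. \<exists>a b. 0 \<le> a \<and> a \<le> b \<and> b \<le> 1 \<and> \<phi> s = {a..b})"

definition upper_exp :: "real set \<Rightarrow> (bool \<Rightarrow> real) \<Rightarrow> real" where
  "upper_exp I f = (SUP p\<in>I. p * f True + (1 - p) * f False)"

definition supermartingale :: "(bool list \<Rightarrow> real set) \<Rightarrow> (bool list \<Rightarrow> real) \<Rightarrow> bool" where
  "supermartingale \<phi> M \<longleftrightarrow> (\<forall>s. upper_exp (\<phi> s) (\<lambda>x. M (s @ [x])) \<le> M s)"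

definition test_supermartingale :: "(bool list \<Rightarrow> real set) \<Rightarrow> (bool list \<Rightarrow> real) \<Rightarrow> bool" where
  "test_supermartingale \<phi> M \<longleftrightarrow> supermartingale \<phi> M \<and> (\<forall>s. 0 \<le> M s) \<and> M [] = 1"

datatype recf = Zero | Succ | Proj nat | Comp recf "recf list" | PrimRec recf recf | Mu recf

inductive rec_eval :: "recf \<Rightarrow> nat list \<Rightarrow> nat \<Rightarrow> bool" where
  zero: "rec_eval Zero xs 0"
| succ: "rec_eval Succ [x] (Suc x)"
| proj: "i < length xs \<Longrightarrow> rec_eval (Proj i) xs (xs ! i)"
| comp: "\<lbrakk>rec_eval f ys y; length ys = length gs;
          \<forall>i<length gs. rec_eval (gs ! i) xs (ys ! i)\<rbrakk> \<Longrightarrow> rec_eval (Comp f gs) xs y"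
| pr0: "rec_eval f xs y \<Longrightarrow> rec_eval (PrimRec f g) (0 # xs) y"
| prS: "\<lbrakk>rec_eval (PrimRec f g) (n # xs) y; rec_eval g (n # y # xs) z\<rbrakk>
        \<Longrightarrow> rec_eval (PrimRec f g) (Suc n # xs) z"
| mu: "\<lbrakk>rec_eval f (n # xs) 0; \<forall>m<n. \<exists>v. 0 < v \<and> rec_eval f (m # xs) v\<rbrakk>
        \<Longrightarrow> rec_eval (Mu f) xs n"

definition recursive_nat :: "(nat \<Rightarrow> nat) \<Rightarrow> bool" where
  "recursive_nat g \<longleftrightarrow> (\<exists>r. \<forall>n. rec_eval r [n] (g n))"

text \<open>Bijective base-2 coding of binary strings as naturals.\<close>
fun bs_code :: "bool list \<Rightarrow> nat" where
  "bs_code [] = 0"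
| "bs_code (b # bs) = 2 * bs_code bs + (if b then 2 else 1)"

definition rat_decode :: "nat \<Rightarrow> rat" where
  "rat_decode n = of_int (int_decode (fst (prod_decode n))) / of_nat (Suc (snd (prod_decode n)))"

definition recursive_rat_process :: "(bool list \<Rightarrow> rat) \<Rightarrow> bool" where
  "recursive_rat_process R \<longleftrightarrow>
     (\<exists>g. recursive_nat g \<and> (\<forall>s. R s = rat_decode (g (bs_code s))))"

text \<open>r is computable iff there is a recursive q : S x N0 -> Q with |r s - q(s,N)| <= 2^-N.\<close>
definition computable_real_process :: "(bool list \<Rightarrow> real) \<Rightarrow> bool" where
  "computable_real_process r \<longleftrightarrow>
     (\<exists>g. recursive_nat g \<and>
        (\<forall>s N. \<bar>r s - of_rat (rat_decode (g (prod_encode (bs_code s, N))))\<bar> \<le> (1/2) ^ N))"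

end

theory Submission
  imports Defs
begin


definition recfn :: "nat \<Rightarrow> (nat list \<Rightarrow> nat) \<Rightarrow> bool" where
  "recfn k F \<longleftrightarrow> (\<exists>r. \<forall>xs. length xs = k \<longrightarrow> rec_eval r xs (F xs))"

lemma recfn_cong: "recfn k F \<Longrightarrow> (\<And>xs. length xs = k \<Longrightarrow> F xs = G xs) \<Longrightarrow> recfn k G"
  unfolding recfn_def by metis

lemma recfn_cong': "recfn k F \<Longrightarrow> k = k' \<Longrightarrow> (\<And>xs. length xs = k' \<Longrightarrow> F xs = G xs) \<Longrightarrow> recfn k' G"
  unfolding recfn_def by metis

lemma recfn_zero: "recfn k (\<lambda>_. 0)"
  unfolding recfn_def by (auto intro: rec_eval.zero)

lemma recfn_proj: "i < k \<Longrightarrow> recfn k (\<lambda>xs. xs ! i)"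
  unfolding recfn_def by (auto intro: rec_eval.proj)

lemma recfn_succ: "recfn 1 (\<lambda>xs. Suc (xs ! 0))"
  unfolding recfn_def
proof (intro exI allI impI)
  fix xs :: "nat list" assume "length xs = 1"
  then obtain x where "xs = [x]" by (cases xs) auto
  then show "rec_eval Succ xs (Suc (xs ! 0))" by (simp add: rec_eval.succ)
qed

lemma recfn_list:
  "\<forall>G\<in>set Gs. recfn k G \<Longrightarrow>
   \<exists>rs. length rs = length Gs \<and> (\<forall>i<length Gs. \<forall>xs. length xs = k \<longrightarrow> rec_eval (rs!i) xs ((Gs!i) xs))"
proof (induction Gs)
  case Nil then show ?case by auto
next
  case (Cons G Gs)
  then obtain rs where rs: "length rs = length Gs" "\<forall>i<length Gs. \<forall>xs. length xs = k \<longrightarrow> rec_eval (rs!i) xs ((Gs!i) xs)"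
    by auto
  from Cons.prems obtain r where r: "\<forall>xs. length xs = k \<longrightarrow> rec_eval r xs (G xs)"
    unfolding recfn_def by auto
  show ?case
    apply (rule exI[of _ "r # rs"])
    using rs r by (auto simp: nth_Cons split: nat.splits)
qed

lemma recfn_comp:
  assumes "recfn (length Gs) F" "\<forall>G\<in>set Gs. recfn k G"
  shows "recfn k (\<lambda>xs. F (map (\<lambda>G. G xs) Gs))"
proof -
  obtain f where f: "\<forall>ys. length ys = length Gs \<longrightarrow> rec_eval f ys (F ys)"
    using assms(1) unfolding recfn_def by auto
  obtain rs where rs: "length rs = length Gs" "\<forall>i<length Gs. \<forall>xs. length xs = k \<longrightarrow> rec_eval (rs!i) xs ((Gs!i) xs)"
    using recfn_list[OF assms(2)] by auto
  show ?thesis unfolding recfn_def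
  proof (intro exI allI impI)
    fix xs :: "nat list" assume "length xs = k"
    then show "rec_eval (Comp f rs) xs (F (map (\<lambda>G. G xs) Gs))"
      using f rs by (intro rec_eval.comp[where ys="map (\<lambda>G. G xs) Gs"]) auto
  qed
qed

lemma recfn_prim:
  assumes "recfn k F" "recfn (Suc (Suc k)) G"
    and H0: "\<And>ys. H 0 ys = F ys" and HS: "\<And>n ys. H (Suc n) ys = G (n # H n ys # ys)"
  shows "recfn (Suc k) (\<lambda>xs. H (hd xs) (tl xs))"
proof -
  obtain f where f: "\<forall>ys. length ys = k \<longrightarrow> rec_eval f ys (F ys)"
    using assms(1) unfolding recfn_def by auto
  obtain g where g: "\<forall>ys. length ys = Suc (Suc k) \<longrightarrow> rec_eval g ys (G ys)"
    using assms(2) unfolding recfn_def by auto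
  have *: "rec_eval (PrimRec f g) (n # ys) (H n ys)" if "length ys = k" for n ys
  proof (induction n)
    case 0
    have "rec_eval f ys (F ys)" using f that by blast
    then show ?case unfolding H0 by (rule rec_eval.pr0)
  next
    case (Suc n)
    have "rec_eval g (n # H n ys # ys) (G (n # H n ys # ys))" using g that by simp
    then show ?case unfolding HS by (rule rec_eval.prS[OF Suc.IH])
  qed
  show ?thesis unfolding recfn_def
  proof (intro exI allI impI)
    fix xs :: "nat list" assume "length xs = Suc k"
    then obtain n ys where "xs = n # ys" "length ys = k" by (cases xs) auto
    then show "rec_eval (PrimRec f g) xs (H (hd xs) (tl xs))" using * by simp
  qed
qed

lemma recfn_mu:
  assumes "recfn (Suc k) F" "\<And>xs. length xs = k \<Longrightarrow> \<exists>n. F (n # xs) = 0"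
  shows "recfn k (\<lambda>xs. LEAST n. F (n # xs) = 0)"
proof -
  obtain f where f: "\<forall>ys. length ys = Suc k \<longrightarrow> rec_eval f ys (F ys)"
    using assms(1) unfolding recfn_def by auto
  show ?thesis unfolding recfn_def
  proof (intro exI allI impI)
    fix xs :: "nat list" assume len: "length xs = k"
    define n where "n = (LEAST n. F (n # xs) = 0)"
    obtain n0 where "F (n0 # xs) = 0" using assms(2)[OF len] by blast
    then have "F (n # xs) = 0" unfolding n_def by (rule LeastI[where P = "\<lambda>n. F (n # xs) = 0"])
    moreover have "\<forall>m<n. F (m # xs) \<noteq> 0"
    proof (intro allI impI)
      fix m assume "m < n"
      then show "F (m # xs) \<noteq> 0" unfolding n_def by (rule not_less_Least[where P = "\<lambda>n. F (n # xs) = 0"])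
    qed
    ultimately show "rec_eval (Mu f) xs (LEAST n. F (n # xs) = 0)"
      unfolding n_def[symmetric]
    proof (intro rec_eval.mu allI impI)
      assume z: "F (n # xs) = 0" and nz: "\<forall>m<n. F (m # xs) \<noteq> 0"
      have "rec_eval f (n # xs) (F (n # xs))" using f len by simp
      then show "rec_eval f (n # xs) 0" unfolding z .
      fix m assume "m < n"
      then have "0 < F (m # xs)" using nz by simp
      moreover have "rec_eval f (m # xs) (F (m # xs))" using f len by simp
      ultimately show "\<exists>v. 0 < v \<and> rec_eval f (m # xs) v" by blast
    qed
  qed
qed

lemma lift1:
  assumes "recfn 1 (\<lambda>xs. h (xs ! 0))" "recfn k F"
  shows "recfn k (\<lambda>xs. h (F xs))"
  using recfn_comp[of "[F]" "\<lambda>xs. h (xs ! 0)" k] assms by simp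

lemma lift2:
  assumes "recfn 2 (\<lambda>xs. h (xs ! 0) (xs ! 1))" "recfn k F" "recfn k G"
  shows "recfn k (\<lambda>xs. h (F xs) (G xs))"
  using recfn_comp[of "[F, G]" "\<lambda>xs. h (xs ! 0) (xs ! 1)" k] assms by (simp add: numeral_2_eq_2)

lemma lift3:
  assumes "recfn 3 (\<lambda>xs. h (xs ! 0) (xs ! 1) (xs ! 2))" "recfn k F" "recfn k G" "recfn k K"
  shows "recfn k (\<lambda>xs. h (F xs) (G xs) (K xs))"
  using recfn_comp[of "[F, G, K]" "\<lambda>xs. h (xs ! 0) (xs ! 1) (xs ! 2)" k] assms by (simp add: numeral_3_eq_3)

lemma recfn_Suc: "recfn k F \<Longrightarrow> recfn k (\<lambda>xs. Suc (F xs))"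
  using lift1[OF recfn_succ] .

lemma recfn_const: "recfn k (\<lambda>_. c)"
  by (induction c) (auto intro: recfn_zero recfn_Suc)

lemma len1: "length xs = Suc 0 \<Longrightarrow> xs = [xs ! 0]"
  by (cases xs) auto
lemma len2: "length xs = Suc (Suc 0) \<Longrightarrow> xs = [xs ! 0, xs ! 1]"
  by (cases xs; cases "tl xs") auto
lemma len3: "length xs = Suc (Suc (Suc 0)) \<Longrightarrow> xs = [xs ! 0, xs ! 1, xs ! 2]"
  by (cases xs; cases "tl xs"; cases "tl (tl xs)") auto

lemma recfn_add0: "recfn 2 (\<lambda>xs. xs ! 0 + xs ! 1)"
proof -
  have "recfn (Suc 1) (\<lambda>xs. (\<lambda>n ys. n + ys ! 0) (hd xs) (tl xs))"
    by (rule recfn_prim[where G = "\<lambda>zs. Suc (zs ! 1)"]) (auto intro: recfn_proj recfn_Suc)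
  then show ?thesis
    by (rule recfn_cong') (auto simp: numeral_3_eq_3 numeral_2_eq_2 length_Suc_conv)
qed

lemma recfn_add: "recfn k F \<Longrightarrow> recfn k G \<Longrightarrow> recfn k (\<lambda>xs. F xs + G xs)"
  using lift2[OF recfn_add0] .

lemma recfn_mult0: "recfn 2 (\<lambda>xs. xs ! 0 * xs ! 1)"
proof -
  have "recfn (Suc 1) (\<lambda>xs. (\<lambda>n ys. n * ys ! 0) (hd xs) (tl xs))"
    by (rule recfn_prim[where G = "\<lambda>zs. zs ! 1 + zs ! 2"]) (auto intro!: recfn_proj recfn_add recfn_zero)
  then show ?thesis
    by (rule recfn_cong') (auto simp: numeral_3_eq_3 numeral_2_eq_2 length_Suc_conv)
qed

lemma recfn_mult: "recfn k F \<Longrightarrow> recfn k G \<Longrightarrow> recfn k (\<lambda>xs. F xs * G xs)"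
  using lift2[OF recfn_mult0] .

lemma recfn_pred0: "recfn 1 (\<lambda>xs. xs ! 0 - 1)"
proof -
  have "recfn (Suc 0) (\<lambda>xs. (\<lambda>n (ys::nat list). n - 1) (hd xs) (tl xs))"
    by (rule recfn_prim[where G = "\<lambda>zs. zs ! 0"]) (auto intro!: recfn_proj recfn_zero)
  then show ?thesis
    by (rule recfn_cong') (auto simp: numeral_3_eq_3 numeral_2_eq_2 length_Suc_conv)
qed

lemma recfn_pred: "recfn k F \<Longrightarrow> recfn k (\<lambda>xs. F xs - 1)"
  using lift1[OF recfn_pred0] .

lemma recfn_monus0: "recfn 2 (\<lambda>xs. xs ! 1 - xs ! 0)"
proof -
  have "recfn (Suc 1) (\<lambda>xs. (\<lambda>n ys. ys ! 0 - n) (hd xs) (tl xs))"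
    apply (rule recfn_prim[where G = "\<lambda>zs. zs ! 1 - 1"])
       apply (rule recfn_proj, simp)
      apply (rule recfn_pred, rule recfn_proj, simp)
     apply simp_all
    done
  then show ?thesis
    by (rule recfn_cong') (auto simp: numeral_3_eq_3 numeral_2_eq_2 length_Suc_conv)
qed

lemma recfn_minus: "recfn k F \<Longrightarrow> recfn k G \<Longrightarrow> recfn k (\<lambda>xs. F xs - G xs)"
  using lift2[OF recfn_monus0, of k G F] by simp

lemma recfn_pow2: "recfn k F \<Longrightarrow> recfn k (\<lambda>xs. 2 ^ F xs)"
proof -
  have "recfn (Suc 0) (\<lambda>xs. (\<lambda>n (ys::nat list). (2::nat) ^ n) (hd xs) (tl xs))"
    by (rule recfn_prim[where G = "\<lambda>zs. zs ! 1 + zs ! 1"]) (auto intro!: recfn_proj recfn_add recfn_const)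
  then have "recfn 1 (\<lambda>xs. 2 ^ (xs ! 0))"
    by (rule recfn_cong') (auto simp: numeral_3_eq_3 numeral_2_eq_2 length_Suc_conv)
  then show "recfn k F \<Longrightarrow> recfn k (\<lambda>xs. 2 ^ F xs)" by (rule lift1[where h = "\<lambda>a. 2 ^ a"])
qed

lemma recfn_tri: "recfn k F \<Longrightarrow> recfn k (\<lambda>xs. triangle (F xs))"
proof -
  have "recfn (Suc 0) (\<lambda>xs. (\<lambda>n (ys::nat list). triangle n) (hd xs) (tl xs))"
    by (rule recfn_prim[where G = "\<lambda>zs. Suc (zs ! 1 + zs ! 0)"]) (auto intro!: recfn_proj recfn_add recfn_Suc recfn_zero)
  then have "recfn 1 (\<lambda>xs. triangle (xs ! 0))"
    by (rule recfn_cong') (auto simp: numeral_3_eq_3 numeral_2_eq_2 length_Suc_conv)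
  then show "recfn k F \<Longrightarrow> recfn k (\<lambda>xs. triangle (F xs))" by (rule lift1[where h = "triangle"])
qed

lemma recfn_ifz: "recfn k C \<Longrightarrow> recfn k F \<Longrightarrow> recfn k G \<Longrightarrow> recfn k (\<lambda>xs. if C xs = 0 then F xs else G xs)"
proof -
  have "recfn (Suc 2) (\<lambda>xs. (\<lambda>n (ys::nat list). if n = 0 then ys ! 0 else ys ! 1) (hd xs) (tl xs))"
    by (rule recfn_prim[where G = "\<lambda>zs. zs ! 3"]) (auto intro!: recfn_proj)
  then have "recfn 3 (\<lambda>xs. (\<lambda>a b c. if a = 0 then b else c) (xs!0) (xs!1) (xs!2))"
    by (rule recfn_cong') (auto simp: numeral_3_eq_3 numeral_2_eq_2 length_Suc_conv)
  then show "recfn k C \<Longrightarrow> recfn k F \<Longrightarrow> recfn k G \<Longrightarrow> recfn k (\<lambda>xs. if C xs = 0 then F xs else G xs)"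
    by (rule lift3[where h = "\<lambda>a b c. if a = 0 then b else c"])
qed



lemma recfn_half0: "recfn 1 (\<lambda>xs. xs!0 div 2)"
proof -
  have "recfn 1 (\<lambda>xs. LEAST n. (\<lambda>zs. 1 - (2 * zs!0 + 2 - zs!1)) (n # xs) = 0)"
    apply (rule recfn_mu)
    subgoal by (intro recfn_minus recfn_const recfn_add recfn_mult recfn_proj) auto
    subgoal for xs by (rule exI[of _ "xs!0"]) simp
    done
  then show ?thesis
  proof (rule recfn_cong)
    fix xs :: "nat list"
    show "(LEAST n. (\<lambda>zs. 1 - (2 * zs!0 + 2 - zs!1)) (n # xs) = 0) = xs ! 0 div 2"
      by (rule Least_equality) auto
  qed
qed

lemma recfn_half: "recfn k F \<Longrightarrow> recfn k (\<lambda>xs. F xs div 2)"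
  using lift1[OF recfn_half0] .

lemma prod_decode_char:
  assumes "triangle c \<le> m" "m < triangle (Suc c)"
  shows "prod_decode m = (m - triangle c, c - (m - triangle c))"
proof -
  have "m - triangle c \<le> c" using assms by simp
  then have "prod_encode (m - triangle c, c - (m - triangle c)) = m"
    using assms by (simp add: prod_encode_def)
  then show ?thesis by (metis prod_encode_inverse)
qed

definition cdec :: "nat \<Rightarrow> nat" where "cdec m = (LEAST c. m < triangle (Suc c))"

lemma cdec_prop: "triangle (cdec m) \<le> m \<and> m < triangle (Suc (cdec m))"
proof -
  have ex: "m < triangle (Suc m)" by (induction m) auto
  have 1: "m < triangle (Suc (cdec m))" unfolding cdec_def by (rule LeastI[where P="\<lambda>c. m < triangle (Suc c)", OF ex])
  have 2: "triangle (cdec m) \<le> m"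
  proof (cases "cdec m")
    case 0 then show ?thesis by simp
  next
    case (Suc c)
    then have "c < cdec m" by simp
    then have "\<not> m < triangle (Suc c)" unfolding cdec_def by (rule not_less_Least)
    then show ?thesis using Suc by simp
  qed
  show ?thesis using 1 2 by simp
qed

lemma prod_decode_cdec: "prod_decode m = (m - triangle (cdec m), cdec m - (m - triangle (cdec m)))"
  using cdec_prop prod_decode_char by blast

lemma recfn_cdec0: "recfn 1 (\<lambda>xs. cdec (xs!0))"
proof -
  have "recfn 1 (\<lambda>xs. LEAST n. (\<lambda>zs. 1 - (triangle (Suc (zs!0)) - zs!1)) (n # xs) = 0)"
    apply (rule recfn_mu)
    subgoal by (intro recfn_minus recfn_const recfn_tri recfn_Suc recfn_proj) auto
    subgoal for xs
    proof -
      have "xs!0 < triangle (Suc (xs!0))" by (induct "xs!0") auto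
      then show ?thesis by (intro exI[of _ "xs!0"]) simp
    qed
    done
  then show ?thesis
  proof (rule recfn_cong)
    fix xs :: "nat list"
    have "\<And>n. (1 - (triangle (Suc n) - xs!0) = 0) = (xs!0 < triangle (Suc n))" by auto
    then show "(LEAST n. (\<lambda>zs. 1 - (triangle (Suc (zs!0)) - zs!1)) (n # xs) = 0) = cdec (xs!0)"
      unfolding cdec_def by simp
  qed
qed

lemma recfn_fst: "recfn k F \<Longrightarrow> recfn k (\<lambda>xs. fst (prod_decode (F xs)))"
  unfolding prod_decode_cdec fst_conv
  by (intro recfn_minus recfn_tri lift1[OF recfn_cdec0])

lemma recfn_snd: "recfn k F \<Longrightarrow> recfn k (\<lambda>xs. snd (prod_decode (F xs)))"
  unfolding prod_decode_cdec snd_conv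
  by (intro recfn_minus recfn_tri lift1[OF recfn_cdec0])

lemma recfn_penc: "recfn k F \<Longrightarrow> recfn k G \<Longrightarrow> recfn k (\<lambda>xs. prod_encode (F xs, G xs))"
  unfolding prod_encode_def by (simp, intro recfn_add recfn_tri)

definition gfun :: "(nat \<Rightarrow> nat) \<Rightarrow> nat \<Rightarrow> nat" where
  "gfun g0 n = (if n = 0 then prod_encode (2, 0) else
     prod_encode (2 * (if fst (prod_decode (g0 (prod_encode (n, n)))) - 2 * (fst (prod_decode (g0 (prod_encode (n, n)))) div 2) = 0
        then (fst (prod_decode (g0 (prod_encode (n, n)))) div 2) * 2 ^ n + 3 * Suc (snd (prod_decode (g0 (prod_encode (n, n)))))
        else 3 * Suc (snd (prod_decode (g0 (prod_encode (n, n))))) - Suc (fst (prod_decode (g0 (prod_encode (n, n)))) div 2) * 2 ^ n),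
       4 * Suc (snd (prod_decode (g0 (prod_encode (n, n))))) * 2 ^ n - 1))"

lemma recursive_gfun:
  assumes "recursive_nat g0" shows "recursive_nat (gfun g0)"
proof -
  obtain r where r: "\<And>n. rec_eval r [n] (g0 n)" using assms unfolding recursive_nat_def by auto
  have g0: "recfn 1 (\<lambda>xs. g0 (xs!0))" unfolding recfn_def
    by (rule exI[of _ r]) (auto simp: length_Suc_conv r)
  have "recfn 1 (\<lambda>xs. gfun g0 (xs!0))"
    unfolding gfun_def
    by (intro recfn_ifz recfn_penc recfn_proj recfn_const recfn_mult recfn_add recfn_minus recfn_half
        recfn_fst recfn_snd recfn_pow2 recfn_Suc lift1[OF g0]) auto
  then obtain r' where "\<forall>xs. length xs = 1 \<longrightarrow> rec_eval r' xs (gfun g0 (xs!0))"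
    unfolding recfn_def by auto
  then show ?thesis unfolding recursive_nat_def
    by (intro exI[of _ r']) (metis One_nat_def length_Cons list.size(3) nth_Cons_0)
qed



lemma upper_exp_le:
  assumes "I = {a..b}" "a \<le> b" "\<And>p. p \<in> I \<Longrightarrow> p * f True + (1 - p) * f False \<le> C"
  shows "upper_exp I f \<le> C"
  unfolding upper_exp_def
proof (rule cSUP_least)
  show "I \<noteq> {}" using assms(1,2) by simp
  fix p assume "p \<in> I" then show "p * f True + (1 - p) * f False \<le> C" by (rule assms(3))
qed

lemma upper_exp_ge:
  assumes "I = {a..b}" "0 \<le> a" "b \<le> 1" "p \<in> I"
  shows "p * f True + (1 - p) * f False \<le> upper_exp I f"
  unfolding upper_exp_def
proof (rule cSUP_upper[OF assms(4)])
  show "bdd_above ((\<lambda>p. p * f True + (1 - p) * f False) ` I)"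
  proof (rule bdd_aboveI2)
    fix p assume "p \<in> I"
    then have p: "0 \<le> p" "p \<le> 1" using assms by auto
    have "p * f True \<le> \<bar>f True\<bar>"
    proof -
      have "p * f True \<le> p * \<bar>f True\<bar>" using p(1) by (intro mult_left_mono) auto
      also have "\<dots> \<le> 1 * \<bar>f True\<bar>" using p(2) by (intro mult_right_mono) auto
      finally show ?thesis by simp
    qed
    moreover have "(1 - p) * f False \<le> \<bar>f False\<bar>"
    proof -
      have "(1 - p) * f False \<le> (1 - p) * \<bar>f False\<bar>" using p(2) by (intro mult_left_mono) auto
      also have "\<dots> \<le> 1 * \<bar>f False\<bar>" using p(1) by (intro mult_right_mono) auto
      finally show ?thesis by simp
    qed
    ultimately show "p * f True + (1 - p) * f False \<le> \<bar>f True\<bar> + \<bar>f False\<bar>" by simp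
  qed
qed

lemma bs_code_ge_length: "length s \<le> bs_code s"
  by (induction s) auto

lemma bs_code_snoc: "bs_code s < bs_code (s @ [x])"
  by (induction s) auto

lemma bs_code_pos: "s \<noteq> [] \<Longrightarrow> 0 < bs_code s"
  by (cases s) auto

lemma int_decode_double: "int_decode (2 * A) = int A"
  by (simp add: int_decode_def sum_decode_def)

lemma ab: fixes q t h h' :: real assumes "q - t \<le> h" "h \<le> h' / 2" shows "(q + 3 * h) / 4 \<le> t / 4 + h' / 2"
  using assms by (simp add: field_simps)

lemma ab5: fixes q t h :: real assumes "t - q \<le> h" shows "t / 4 + h / 2 \<le> (q + 3 * h) / 4"
  using assms by (simp add: field_simps)

lemma ab6: fixes p a b K :: real shows "p * (a / 4 + K) + (1 - p) * (b / 4 + K) = (p * a + (1 - p) * b) / 4 + K"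
  by (simp add: field_simps)

lemma gen2: fixes X B P :: rat assumes "B \<noteq> 0" "P \<noteq> 0"
  shows "(X * P + 3 * B) / (4 * B * P) = (X / B + 3 / P) / 4"
  using assms by (simp add: field_simps)



theorem lemma4p5:
  fixes \<phi> :: "bool list \<Rightarrow> real set" and T :: "bool list \<Rightarrow> real"
  assumes "forecasting_system \<phi>"
    and "test_supermartingale \<phi> T"
    and "computable_real_process T"
  shows "\<exists>R :: bool list \<Rightarrow> rat. recursive_rat_process R \<and> (\<forall>s. 0 < R s)
           \<and> test_supermartingale \<phi> (\<lambda>s. of_rat (R s))
           \<and> (\<forall>s. \<bar>4 * of_rat (R s) - T s\<bar> \<le> 4 * (1/2) ^ length s)"
proof -
  obtain g0 where g0: "recursive_nat g0"
    and apx: "\<And>s N. \<bar>T s - of_rat (rat_decode (g0 (prod_encode (bs_code s, N))))\<bar> \<le> (1/2) ^ N"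
    using assms(3) unfolding computable_real_process_def by auto
  have Tnn: "\<And>s. 0 \<le> T s" and T0: "T [] = 1" and Tsup: "supermartingale \<phi> T"
    using assms(2) unfolding test_supermartingale_def by auto
  define qr where "qr s = rat_decode (g0 (prod_encode (bs_code s, bs_code s)))" for s
  define R where "R s = (if s = [] then 1 else (qr s + 3 / 2 ^ bs_code s) / 4)" for s
  have qapx: "\<bar>T s - of_rat (qr s)\<bar> \<le> (1/2) ^ bs_code s" for s
    unfolding qr_def by (rule apx)
  have Rreal: "of_rat (R s) = (of_rat (qr s) + 3 * (1/2) ^ bs_code s) / (4::real)" if "s \<noteq> []" for s
    using that unfolding R_def by (simp add: of_rat_add of_rat_divide of_rat_power power_one_over)
  have Rpos: "0 < R s" for s
  proof (cases "s = []")
    case True then show ?thesis by (simp add: R_def)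
  next
    case False
    have h: "(0::real) < (1/2) ^ bs_code s" by simp
    have "(0::real) < of_rat (qr s) + 3 * (1/2) ^ bs_code s"
    proof -
      have "T s - of_rat (qr s) \<le> (1/2) ^ bs_code s" using qapx[of s] by (simp add: abs_le_iff)
      then show ?thesis using Tnn[of s] h by linarith
    qed
    then have "(0::real) < of_rat (R s)" unfolding Rreal[OF False] by simp
    then show ?thesis by simp
  qed
  have recR: "recursive_rat_process R"
    unfolding recursive_rat_process_def
  proof (intro exI conjI allI)
    show "recursive_nat (gfun g0)" by (rule recursive_gfun[OF g0])
    fix s
    show "R s = rat_decode (gfun g0 (bs_code s))"
    proof (cases "s = []")
      case True
      then show ?thesis
        by (simp add: R_def gfun_def rat_decode_def int_decode_def sum_decode_def)
    next
      case False
      define n where "n = bs_code s"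
      have n0: "n \<noteq> 0" using bs_code_pos[OF False] n_def by simp
      define m where "m = g0 (prod_encode (n, n))"
      define a where "a = fst (prod_decode m)"
      define b where "b = snd (prod_decode m)"
      define x where "x = int_decode a"
      have qr_eq: "qr s = of_int x / of_nat (Suc b)"
        unfolding qr_def x_def a_def b_def m_def n_def rat_decode_def by simp
      have Rs: "R s = (of_int x / of_nat (Suc b) + 3 / 2 ^ n) / 4"
        using False unfolding R_def qr_eq n_def by simp
      have "(0::rat) < of_int x / of_nat (Suc b) + 3 / 2 ^ n"
        using Rpos[of s] unfolding Rs by simp
      then have "(0::rat) < (of_int x / of_nat (Suc b) + 3 / 2 ^ n) * (of_nat (Suc b) * 2 ^ n)"
        by (intro mult_pos_pos) auto
      also have "\<dots> = of_int x * 2 ^ n + 3 * of_nat (Suc b)"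
      proof -
        have gen: "\<And>(B::rat) (P::rat) X. B \<noteq> 0 \<Longrightarrow> P \<noteq> 0 \<Longrightarrow> (X / B + 3 / P) * (B * P) = X * P + 3 * B"
          by (simp add: field_simps)
        show ?thesis by (rule gen) simp_all
      qed
      also have "\<dots> = of_int (x * 2 ^ n + 3 * int (Suc b))"
        by simp
      finally have "(0::rat) < of_int (x * 2 ^ n + 3 * int (Suc b))" .
      then have xpos: "0 < x * 2 ^ n + 3 * int (Suc b)" by (simp only: of_int_0_less_iff)
      define A where "A = (if a - 2 * (a div 2) = 0 then (a div 2) * 2 ^ n + 3 * Suc b
                           else 3 * Suc b - Suc (a div 2) * 2 ^ n)"
      have Aeq: "int A = x * 2 ^ n + 3 * int (Suc b)"
      proof (cases "even a")
        case True
        then have "a - 2 * (a div 2) = 0" by auto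
        moreover have "x = int (a div 2)" using True unfolding x_def int_decode_def sum_decode_def by simp
        ultimately show ?thesis unfolding A_def by simp
      next
        case False
        then have ne: "a - 2 * (a div 2) \<noteq> 0" by presburger
        have xv: "x = - int (a div 2) - 1" using False unfolding x_def int_decode_def sum_decode_def by simp
        have le: "Suc (a div 2) * 2 ^ n \<le> 3 * Suc b"
        proof -
          have "int (Suc (a div 2) * 2 ^ n) < int (3 * Suc b)" using xpos xv by (simp add: algebra_simps)
          then show ?thesis by linarith
        qed
        have "A = 3 * Suc b - Suc (a div 2) * 2 ^ n" unfolding A_def using ne by simp
        then have "int A = int (3 * Suc b) - int (Suc (a div 2) * 2 ^ n)" using le by (simp add: of_nat_diff)
        also have "\<dots> = x * 2 ^ n + 3 * int (Suc b)" unfolding xv by (simp add: algebra_simps)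
        finally show ?thesis .
      qed
      have g_eq0: "gfun g0 n = (if n = 0 then prod_encode (2, 0) else prod_encode (2 * A, 4 * Suc b * 2 ^ n - 1))"
        unfolding gfun_def A_def a_def b_def m_def by (rule refl)
      have g_eq: "gfun g0 n = prod_encode (2 * A, 4 * Suc b * 2 ^ n - 1)"
        using n0 g_eq0 by simp
      have D: "Suc (4 * Suc b * 2 ^ n - 1) = 4 * Suc b * 2 ^ n" by simp
      have "rat_decode (gfun g0 n) = of_int (int A) / of_nat (4 * Suc b * 2 ^ n)"
        unfolding g_eq rat_decode_def prod_encode_inverse fst_conv snd_conv int_decode_double D by simp
      also have "\<dots> = R s"
      proof -
        have e1: "(of_int (int A) :: rat) = of_int x * 2 ^ n + 3 * of_nat (Suc b)" unfolding Aeq by simp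
        have e2: "(of_nat (4 * Suc b * 2 ^ n) :: rat) = 4 * of_nat (Suc b) * 2 ^ n" by simp
        show ?thesis unfolding e1 e2 Rs by (rule gen2) simp_all
      qed
      finally show ?thesis unfolding n_def by simp
    qed
  qed
  have bound: "\<bar>4 * of_rat (R s) - T s\<bar> \<le> 4 * (1/2) ^ length s" for s
  proof (cases "s = []")
    case True then show ?thesis by (simp add: R_def T0)
  next
    case False
    have "\<bar>4 * of_rat (R s) - T s\<bar> = \<bar>(of_rat (qr s) - T s) + 3 * (1/2) ^ bs_code s\<bar>"
    proof -
      have e: "4 * (of_rat (R s)::real) = of_rat (qr s) + 3 * (1/2)^bs_code s"
        unfolding Rreal[OF False] by simp
      show ?thesis unfolding e by (simp add: algebra_simps)
    qed
    also have "\<dots> \<le> 4 * (1/2) ^ bs_code s" using qapx[of s] by (simp add: abs_le_iff)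
    also have "\<dots> \<le> 4 * (1/2) ^ length s"
      using bs_code_ge_length[of s] by (simp add: power_decreasing)
    finally show ?thesis .
  qed
  have super: "supermartingale \<phi> (\<lambda>s. of_rat (R s))"
    unfolding supermartingale_def
  proof
    fix s
    obtain lo hi where I: "0 \<le> lo" "lo \<le> hi" "hi \<le> 1" "\<phi> s = {lo..hi}"
      using assms(1) unfolding forecasting_system_def by blast
    define n where "n = bs_code s"
    define K :: real where "K = (1/2) ^ n / 2"
    have child: "of_rat (R (s @ [x])) \<le> T (s @ [x]) / 4 + K" for x
    proof -
      have ne: "s @ [x] \<noteq> []" by simp
      have lt: "Suc n \<le> bs_code (s @ [x])" using bs_code_snoc[of s x] n_def by simp
      have pd: "(1/2::real) ^ bs_code (s @ [x]) \<le> (1/2) ^ Suc n"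
        by (rule power_decreasing[OF lt]) simp_all
      have q1: "of_rat (qr (s @ [x])) - T (s @ [x]) \<le> (1/2) ^ bs_code (s @ [x])"
        using qapx[of "s @ [x]"] by (simp add: abs_le_iff)
      have pd2: "(1/2::real) ^ bs_code (s @ [x]) \<le> (1/2)^n / 2" using pd by simp
      show ?thesis unfolding Rreal[OF ne] K_def by (rule ab[OF q1 pd2])
    qed
    have "upper_exp (\<phi> s) (\<lambda>x. of_rat (R (s @ [x]))) \<le> T s / 4 + K"
    proof (rule upper_exp_le[OF I(4) I(2)])
      fix p assume p: "p \<in> \<phi> s"
      then have p01: "0 \<le> p" "0 \<le> 1 - p" using I by auto
      have "p * of_rat (R (s @ [True])) + (1 - p) * of_rat (R (s @ [False]))
            \<le> p * (T (s @ [True]) / 4 + K) + (1 - p) * (T (s @ [False]) / 4 + K)"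
        using p01 child by (intro add_mono mult_left_mono) auto
      also have "\<dots> = (p * T (s @ [True]) + (1 - p) * T (s @ [False])) / 4 + K"
        by (rule ab6)
      also have "\<dots> \<le> upper_exp (\<phi> s) (\<lambda>x. T (s @ [x])) / 4 + K"
        using upper_exp_ge[OF I(4) I(1) I(3) p, of "\<lambda>x. T (s @ [x])"]
        by (intro add_right_mono divide_right_mono) auto
      also have "\<dots> \<le> T s / 4 + K"
      proof -
        have "upper_exp (\<phi> s) (\<lambda>x. T (s @ [x])) \<le> T s" using Tsup unfolding supermartingale_def by blast
        then show ?thesis by (intro add_right_mono divide_right_mono) auto
      qed
      finally show "p * of_rat (R (s @ [True])) + (1 - p) * of_rat (R (s @ [False])) \<le> T s / 4 + K" .
    qed
    also have "T s / 4 + K \<le> of_rat (R s)"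
    proof (cases "s = []")
      case True then show ?thesis by (simp add: T0 R_def K_def n_def)
    next
      case False
      have q2: "T s - of_rat (qr s) \<le> (1/2) ^ bs_code s" using qapx[of s] by (simp add: abs_le_iff)
      show ?thesis unfolding Rreal[OF False] K_def n_def by (rule ab5[OF q2])
    qed
    finally show "upper_exp (\<phi> s) (\<lambda>x. of_rat (R (s @ [x]))) \<le> of_rat (R s)" .
  qed
  have tsm: "test_supermartingale \<phi> (\<lambda>s. of_rat (R s))"
    unfolding test_supermartingale_def
  proof (intro conjI allI super)
    fix s show "0 \<le> (of_rat (R s) :: real)" using Rpos[of s] by (simp add: less_imp_le)
  next
    show "(of_rat (R []) :: real) = 1" by (simp add: R_def)
  qed
  show ?thesis
  proof (rule exI[of _ R], intro conjI allI)
    show "recursive_rat_process R" by (rule recR)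
    show "test_supermartingale \<phi> (\<lambda>s. of_rat (R s))" by (rule tsm)
    fix s
    show "0 < R s" by (rule Rpos)
    show "\<bar>4 * of_rat (R s) - T s\<bar> \<le> 4 * (1/2) ^ length s" by (rule bound)
  qed
qed


end
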